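(* Let $c_1,c_2,c_3\in\mathbb{C}$ with $|c_i|>1$, let $r_i=\sqrt{|c_i|^2-1}$, and let $L_i=\{z\in\mathbb{D}:|z-c_i|=r_i\}$, where $\mathbb{D}=\{z\in\mathbb{C}:|z|<1\}$. Assume that $L_1,L_2,L_3$ together with the point $z_0=0$ satisfy the configuration condition in the context. Define $\tau_i\colon S^1\to S^1$ by $\tau_i(z)=\dfrac{r_i^2}{\bar z-\bar c_i}+c_i$ if $|z-c_i|>r_i$ and $\tau_i(z)=z$ otherwise. Then there exists a real constant $C<1$, depending only on $L_1,L_2,L_3$, such that for all $x,y\in S^1$ there exists $i\in\{1,2,3\}$ with $|\tau_i(x)-\tau_i(y)|<C|x-y|$.
   Context: $\mathbb{D}$ is the Poincaré disk model of the hyperbolic plane with boundary $S^1=\{|z|=1\}$; hyperbolic lines not through $0$ are the arcs $\{z\in\mathbb{D}:|z-c|^2=|c|^2-1\}$ with $|c|>1$, and lines through $0$ are diameters. Configuration condition: for all distinct $i,i'\in\{1,2,3\}$, either (a) $L_i\cap L_{i'}=\emptyset$ and $z_0$ lies in the connected component of $\mathbb{D}\setminus(L_i\cup L_{i'})$ whose boundary contains both lines, or (b) $L_i,L_{i'}$ meet at an angle of measure $\pi/m$ for some integer $m\ge2$, and $z_0$ lies in the interior of that angle. *)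

theory Defs
  imports "HOL-Analysis.Analysis"
begin

definition unit_disk :: "complex set" where
  "unit_disk = ball 0 1"

definition hrad :: "complex \<Rightarrow> real" where
  "hrad c = sqrt ((cmod c)\<^sup>2 - 1)"

definition hline :: "complex \<Rightarrow> complex set" where
  "hline c = {z \<in> unit_disk. cmod (z - c) = hrad c}"

definition vec_angle :: "complex \<Rightarrow> complex \<Rightarrow> real" where
  "vec_angle u v = arccos (Re (u * cnj v) / (cmod u * cmod v))"

text \<open>Side indicator: +1 if z lies outside the circle |w - c| = hrad c, -1 otherwise.
  The outward normal at a point p of that circle, pointing towards the side of z,
  is side c z * (p - c).\<close>

definition side :: "complex \<Rightarrow> complex \<Rightarrow> real" where
  "side c z = (if cmod (z - c) > hrad c then 1 else -1)"

text \<open>Measure of the angle at a common point p of the lines with centres c and c'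
  of the angular sector (component of the disk minus both lines) containing z0:
  it is pi minus the angle between the normals pointing into the sector.\<close>

definition sector_angle :: "complex \<Rightarrow> complex \<Rightarrow> complex \<Rightarrow> complex \<Rightarrow> real" where
  "sector_angle c c' p z0 =
     pi - vec_angle (of_real (side c z0) * (p - c)) (of_real (side c' z0) * (p - c'))"

definition pair_condition :: "complex \<Rightarrow> complex \<Rightarrow> complex \<Rightarrow> bool" where
  "pair_condition c c' z0 \<longleftrightarrow>
     (hline c \<inter> hline c' = {} \<and> z0 \<in> unit_disk - (hline c \<union> hline c') \<and>
        hline c \<union> hline c' \<subseteq>
          frontier (connected_component_set (unit_disk - (hline c \<union> hline c')) z0))
   \<or> (\<exists>p m. p \<in> hline c \<inter> hline c' \<and> (m::nat) \<ge> 2 \<and>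
        z0 \<in> unit_disk - (hline c \<union> hline c') \<and>
        sector_angle c c' p z0 = pi / real m)"

definition config_condition :: "(nat \<Rightarrow> complex) \<Rightarrow> complex \<Rightarrow> bool" where
  "config_condition c z0 \<longleftrightarrow>
     (\<forall>i\<in>{1,2,3}. \<forall>i'\<in>{1,2,3::nat}. i \<noteq> i' \<longrightarrow> pair_condition (c i) (c i') z0)"

definition tau :: "complex \<Rightarrow> complex \<Rightarrow> complex" where
  "tau c z = (if cmod (z - c) > hrad c
              then of_real ((hrad c)\<^sup>2) / (cnj z - cnj c) + c else z)"

end

theory Submission
  imports Defs
begin


lemma hrad_sq: "cmod c > 1 \<Longrightarrow> (hrad c)^2 = (cmod c)^2 - 1"
  unfolding hrad_def by (simp add: power_mono_iff)

lemma hrad_pos: "cmod c > 1 \<Longrightarrow> hrad c > 0"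
  unfolding hrad_def by (simp add: abs_square_less_1)

lemma hrad_lt: "cmod c > 1 \<Longrightarrow> hrad c < cmod c"
  unfolding hrad_def by (simp add: real_sqrt_less_iff real_less_lsqrt)

lemma cmod_sq: "(cmod z)^2 = (Re z)^2 + (Im z)^2"
  by (simp add: cmod_power2)

lemma cmod_diff_sq: "(cmod (z - c))^2 = (cmod z)^2 - 2*Re(z*cnj c) + (cmod c)^2"
  by (simp only: cmod_sq) (simp add: power2_eq_square algebra_simps)

lemma circ_iff: "cmod c > 1 \<Longrightarrow> (cmod (z - c) = hrad c) \<longleftrightarrow>
   (cmod z)^2 + 1 = 2 * Re (z * cnj c)"
proof -
  assume h: "cmod c > 1"
  have "(cmod (z - c) = hrad c) \<longleftrightarrow> (cmod (z-c))^2 = (hrad c)^2"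
    using hrad_pos[OF h] by (simp add: power2_eq_iff_nonneg)
  also have "\<dots> \<longleftrightarrow> (cmod z)^2 + 1 = 2 * Re (z * cnj c)"
    using hrad_sq[OF h] cmod_diff_sq[of z c] by linarith
  finally show ?thesis .
qed

lemma inside_iff: "cmod c > 1 \<Longrightarrow> (cmod (z - c) < hrad c) \<longleftrightarrow>
   (cmod z)^2 + 1 < 2 * Re (z * cnj c)"
proof -
  assume h: "cmod c > 1"
  have "(cmod (z - c) < hrad c) \<longleftrightarrow> (cmod (z-c))^2 < (hrad c)^2"
    using hrad_pos[OF h] by (smt (verit) norm_ge_zero power_mono power_strict_mono zero_less_numeral)
  also have "\<dots> \<longleftrightarrow> (cmod z)^2 + 1 < 2 * Re (z * cnj c)"
    using hrad_sq[OF h] cmod_diff_sq[of z c] by linarith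
  finally show ?thesis .
qed

lemma outside_iff: "cmod c > 1 \<Longrightarrow> (cmod (z - c) > hrad c) \<longleftrightarrow>
   (cmod z)^2 + 1 > 2 * Re (z * cnj c)"
  using circ_iff inside_iff by (smt (verit))


lemma inv_cnj: "u \<noteq> 0 \<Longrightarrow> 1 / cnj u = u / of_real ((cmod u)^2)"
proof -
  assume u0: "u \<noteq> 0"
  have a: "u * cnj u = of_real ((cmod u)^2)" by (rule complex_norm_square[symmetric])
  have "1 / cnj u = u / (u * cnj u)" using u0 by simp
  then show ?thesis by (simp only: a)
qed

lemma mixed_bound:
  fixes u v :: complex and r :: real
  assumes r: "r > 0" and R: "cmod u > r" and v: "cmod v \<le> r"
  shows "cmod (of_real (r^2) / cnj u - v) \<le> r / cmod u * cmod (u - v)"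
proof -
  define R where "R = cmod u"
  have Rp: "R > 0" using R r R_def by auto
  have u0: "u \<noteq> 0" using Rp R_def by auto
  define k where "k = r^2 / R^2"
  have kR: "k * R^2 = r^2" using Rp by (simp add: k_def)
  have kR': "k^2 * R^2 = k * r^2" using kR by (simp add: power2_eq_square algebra_simps)
  have rR: "r^2 < R^2" using R r R_def by (simp add: power_strict_mono)
  have k1: "k \<le> 1" unfolding k_def using Rp rR by simp
  have kk: "(r/R)^2 = k" by (simp add: k_def power_divide)
  have e: "of_real (r^2) / cnj u = of_real k * u"
    using inv_cnj[OF u0] by (simp add: k_def R_def divide_inverse mult.commute mult.left_commute)
  have lhs: "(cmod (of_real k * u - v))^2 = k^2 * (cmod u)^2 - 2*k*Re(u*cnj v) + (cmod v)^2"
    by (simp only: cmod_sq) (simp add: power2_eq_square algebra_simps)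
  have rhs: "(cmod (u - v))^2 = (cmod u)^2 - 2*Re(u*cnj v) + (cmod v)^2"
    by (simp only: cmod_sq) (simp add: power2_eq_square algebra_simps)
  have key: "k * (cmod (u - v))^2 - (cmod (of_real k * u - v))^2
       = (1 - k) * (r^2 - (cmod v)^2)"
    unfolding lhs rhs using kR kR' unfolding R_def by (simp add: algebra_simps)
  have "(cmod v)^2 \<le> r^2" using v by (simp add: power_mono)
  then have "0 \<le> (1 - k) * (r^2 - (cmod v)^2)" using k1 by simp
  then have "(cmod (of_real k * u - v))^2 \<le> ((r/R) * cmod (u - v))^2"
  proof -
    have "((r/R) * cmod (u - v))^2 = k * (cmod (u - v))^2"
      by (simp only: power_mult_distrib kk)
    then show ?thesis using key \<open>0 \<le> (1 - k) * (r^2 - (cmod v)^2)\<close> by linarith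
  qed
  moreover have nn: "0 \<le> (r/R) * cmod (u - v)" using Rp r by simp
  ultimately have "cmod (of_real k * u - v) \<le> (r/R) * cmod (u - v)"
    by (rule power2_le_imp_le)
  then have "cmod (of_real k * u - v) \<le> (r / cmod u) * cmod (u - v)"
    by (simp only: R_def)
  then show ?thesis by (simp only: e)
qed

lemma out_bound:
  fixes u v :: complex and r :: real
  assumes r: "r > 0" and R: "cmod u > r" and v: "cmod v > r"
  shows "cmod (of_real (r^2) / cnj u - of_real (r^2) / cnj v) \<le> r / cmod u * cmod (u - v)"
proof -
  have u0: "u \<noteq> 0" and v0: "v \<noteq> 0" using R v r by auto
  have "of_real (r^2) / cnj u - of_real (r^2) / cnj v = of_real (r^2) * (cnj v - cnj u) / (cnj u * cnj v)"
    using u0 v0 by (simp add: field_simps)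
  also have "cnj v - cnj u = cnj (v - u)" by simp
  finally have "cmod (of_real (r^2) / cnj u - of_real (r^2) / cnj v) = r^2 * cmod (v - u) / (cmod u * cmod v)"
    by (simp only: norm_mult norm_divide complex_mod_cnj norm_of_real) simp
  also have "\<dots> = (r / cmod u) * (r / cmod v) * cmod (u - v)"
    by (simp add: power2_eq_square norm_minus_commute)
  also have "\<dots> \<le> (r / cmod u) * 1 * cmod (u - v)"
    using r R v by (intro mult_right_mono mult_left_mono) (auto simp: divide_le_eq_1)
  finally show ?thesis by simp
qed

lemma tau_bound:
  assumes c: "cmod c > 1" and x: "cmod (x - c) > hrad c"
  shows "cmod (tau c x - tau c y) \<le> hrad c / cmod (x - c) * cmod (x - y)"
proof (cases "cmod (y - c) > hrad c")
  case True
  have "tau c x - tau c y = of_real ((hrad c)^2) / cnj (x - c) - of_real ((hrad c)^2) / cnj (y - c)"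
    using x True by (simp add: tau_def)
  then show ?thesis using out_bound[OF hrad_pos[OF c] x True]
    by (simp add: norm_minus_commute)
next
  case False
  have "tau c x - tau c y = of_real ((hrad c)^2) / cnj (x - c) - (y - c)"
    using x False by (simp add: tau_def)
  moreover have "cmod (x - c - (y - c)) = cmod (x - y)" by simp
  ultimately show ?thesis using mixed_bound[OF hrad_pos[OF c] x, of "y - c"] False
    by simp
qed


lemma Re_ofreal_mult: "Re (of_real a * z) = a * Re z"
  by simp

lemma div_le: "0 \<le> a \<Longrightarrow> 0 \<le> x \<Longrightarrow> a / (1 + x) \<le> (a::real)"
  by (simp add: divide_le_eq algebra_simps mult_nonneg_nonneg)

definition P :: "complex \<Rightarrow> complex" where
  "P k = of_real (1 / (1 + sqrt (1 - (cmod k)^2))) * k"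

lemma P_norm: "cmod k < 1 \<Longrightarrow> cmod (P k) < 1"
proof -
  assume k: "cmod k < 1"
  have k2: "(cmod k)^2 < 1" using k by (simp add: abs_square_less_1)
  have w: "sqrt (1 - (cmod k)^2) \<ge> 0" using k2 by simp
  have "cmod (P k) = cmod k / (1 + sqrt (1 - (cmod k)^2))"
    unfolding P_def norm_mult norm_of_real using w by simp
  also have "\<dots> \<le> cmod k" using w by (intro div_le) auto
  finally show ?thesis using k by simp
qed

lemma P_eq:
  assumes k: "cmod k < 1"
  shows "(cmod (P k))^2 + 1 - 2 * Re (P k * cnj c)
     = 2 / (1 + sqrt (1 - (cmod k)^2)) * (1 - Re (k * cnj c))"
proof -
  define w where "w = sqrt (1 - (cmod k)^2)"
  have k2: "(cmod k)^2 < 1" using k by (simp add: abs_square_less_1)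
  have w0: "w \<ge> 0" unfolding w_def using k2 by simp
  have ww: "w^2 = 1 - (cmod k)^2" unfolding w_def using k2 by simp
  have n: "(cmod (P k))^2 = (cmod k)^2 / (1 + w)^2"
    unfolding P_def w_def[symmetric] norm_mult norm_of_real using w0 by (simp add: power_divide)
  have r: "Re (P k * cnj c) = Re (k * cnj c) / (1 + w)"
    unfolding P_def w_def[symmetric] mult.assoc Re_ofreal_mult by simp
  have "(cmod k)^2 / (1 + w)^2 = (1 - w) / (1 + w)"
  proof -
    have "(cmod k)^2 = (1-w)*(1+w)" using ww by (simp add: algebra_simps power2_eq_square)
    moreover have "1 + w \<noteq> 0" using w0 by simp
    ultimately show ?thesis by (simp add: power2_eq_square)
  qed
  then show ?thesis unfolding n r w_def[symmetric] using w0
    by (simp add: field_simps)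
qed

lemma P_hline:
  assumes c: "cmod c > 1" and k: "cmod k < 1" and e: "Re (k * cnj c) = 1"
  shows "P k \<in> hline c"
proof -
  have "2 / (1 + sqrt (1 - (cmod k)^2)) * (1 - Re (k * cnj c)) = 0" using e by simp
  then have "(cmod (P k))^2 + 1 = 2 * Re (P k * cnj c)" using P_eq[OF k, of c] by linarith
  then show ?thesis unfolding hline_def unit_disk_def using circ_iff[OF c] P_norm[OF k] by simp
qed

lemma P_inside:
  assumes c: "cmod c > 1" and k: "cmod k < 1" and e: "Re (k * cnj c) > 1"
  shows "cmod (P k - c) < hrad c"
proof -
  have k2: "(cmod k)^2 < 1" using k by (simp add: abs_square_less_1)
  have w: "sqrt (1 - (cmod k)^2) \<ge> 0" using k2 by simp
  have "2 / (1 + sqrt (1 - (cmod k)^2)) * (1 - Re (k * cnj c)) < 0"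
  proof (rule mult_pos_neg)
    show "0 < 2 / (1 + sqrt (1 - (cmod k)^2))" using w by (simp add: add_pos_nonneg)
    show "1 - Re (k * cnj c) < 0" using e by linarith
  qed
  then have "(cmod (P k))^2 + 1 < 2 * Re (P k * cnj c)" using P_eq[OF k, of c] by linarith
  then show ?thesis using inside_iff[OF c] by simp
qed


lemma onesided:
  assumes c: "cmod c > 1" and c': "cmod c' > 1" and H: "\<forall>z\<in>hline c'. hrad c \<le> cmod (z - c)"
  shows "hrad c' * \<bar>Im (c' * cnj c)\<bar> \<le> (cmod c')^2 - Re (c' * cnj c)"
proof (rule field_le_mult_one_interval)
  fix h :: real assume h0: "0 < h" and h1: "h < 1"
  define q where "q = Im (c' * cnj c)"
  define s where "s = Re (c' * cnj c)"
  define B where "B = (cmod c')^2"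
  define r where "r = hrad c'"
  define t where "t = - sgn q * r * h"
  define k where "k = c' * (1 + \<i> * of_real t) / of_real B"
  have Bp: "B > 1" unfolding B_def using c' by (simp add: one_less_power)
  have rp: "r > 0" unfolding r_def using hrad_pos[OF c'] .
  have r2: "r^2 = B - 1" unfolding r_def B_def using hrad_sq[OF c'] .
  have tq: "- t * q = \<bar>q\<bar> * r * h" unfolding t_def by (simp add: abs_sgn algebra_simps)
  have "\<bar>t\<bar> \<le> r * h" unfolding t_def using rp h0 by (simp add: abs_mult abs_sgn_eq)
  also have "\<dots> < r" using rp h1 by simp
  finally have "\<bar>t\<bar> < r" .
  then have t2: "t^2 < B - 1" using r2 by (metis abs_ge_zero abs_power2 power_strict_mono zero_less_numeral power2_abs)
  have n1: "(cmod (1 + \<i> * of_real t))^2 = 1 + t^2" by (simp add: cmod_sq)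
  have "cmod k = cmod c' * cmod (1 + \<i> * of_real t) / B"
    unfolding k_def using Bp by (simp add: norm_mult norm_divide)
  then have "(cmod k)^2 = B * (1 + t^2) / B^2"
    using n1 by (simp add: power_mult_distrib power_divide B_def)
  also have "\<dots> = (1 + t^2) / B" using Bp by (simp add: power2_eq_square)
  also have "\<dots> < 1" using Bp t2 by simp
  finally have "(cmod k)^2 < 1" .
  then have kn: "cmod k < 1" by (simp add: abs_square_less_1)
  have cc: "c' * cnj c' = of_real B" unfolding B_def by (rule complex_norm_square[symmetric])
  have "k * cnj c' = (1 + \<i> * of_real t) * (c' * cnj c') / of_real B"
    unfolding k_def by (simp add: algebra_simps)
  also have "\<dots> = 1 + \<i> * of_real t" using Bp by (simp add: cc)
  finally have e1: "Re (k * cnj c') = 1" by simp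
  have "k * cnj c = (1 + \<i> * of_real t) * (c' * cnj c) / of_real B"
    unfolding k_def by (simp add: algebra_simps)
  then have e2: "Re (k * cnj c) = (s - t * q) / B"
    unfolding s_def q_def by (simp add: Re_divide_of_real algebra_simps)
  show "h * (hrad c' * \<bar>Im (c' * cnj c)\<bar>) \<le> (cmod c')^2 - Re (c' * cnj c)"
  proof (rule ccontr)
    assume "\<not> ?thesis"
    then have "s - t * q > B" using tq unfolding s_def q_def r_def B_def by (simp add: algebra_simps)
    then have "Re (k * cnj c) > 1" using e2 Bp by simp
    then have "cmod (P k - c) < hrad c" using P_inside[OF c kn] by simp
    moreover have "P k \<in> hline c'" using P_hline[OF c' kn e1] .
    ultimately show False using H by force
  qed
qed


lemma disjoint_re:
  assumes c: "cmod c > 1" and c': "cmod c' > 1" and disj: "hline c \<inter> hline c' = {}"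
    and H1: "\<forall>z\<in>hline c'. hrad c \<le> cmod (z - c)"
    and H2: "\<forall>z\<in>hline c. hrad c' \<le> cmod (z - c')"
  shows "Re (c * cnj c') \<le> 1"
proof (rule ccontr)
  assume nt: "\<not> Re (c * cnj c') \<le> 1"
  define s where "s = Re (c' * cnj c)"
  define q where "q = Im (c' * cnj c)"
  define A where "A = (cmod c)^2"
  define B where "B = (cmod c')^2"
  have s1: "s > 1" using nt unfolding s_def by (simp add: algebra_simps)
  have o1: "hrad c' * \<bar>q\<bar> \<le> B - s" using onesided[OF c c' H1] unfolding q_def s_def B_def .
  have o2': "hrad c * \<bar>Im (c * cnj c')\<bar> \<le> A - Re (c * cnj c')" using onesided[OF c' c H2] unfolding A_def .
  have "\<bar>Im (c * cnj c')\<bar> = \<bar>q\<bar>" "Re (c * cnj c') = s" unfolding q_def s_def by (simp_all add: algebra_simps)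
  then have o2: "hrad c * \<bar>q\<bar> \<le> A - s" using o2' by simp
  have qq: "q^2 = A * B - s^2"
  proof -
    have "(cmod (c' * cnj c))^2 = s^2 + q^2" unfolding s_def q_def by (simp add: cmod_sq)
    moreover have "(cmod (c' * cnj c))^2 = A * B" unfolding A_def B_def by (simp add: norm_mult power_mult_distrib)
    ultimately show ?thesis by simp
  qed
  have rA: "(hrad c)^2 = A - 1" unfolding A_def using hrad_sq[OF c] .
  have rB: "(hrad c')^2 = B - 1" unfolding B_def using hrad_sq[OF c'] .
  have rp: "hrad c > 0" "hrad c' > 0" using hrad_pos c c' by auto
  have Bs: "B - s \<ge> 0" using o1 rp by (smt (verit) abs_ge_zero mult_nonneg_nonneg)
  have As: "A - s \<ge> 0" using o2 rp by (smt (verit) abs_ge_zero mult_nonneg_nonneg)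
  have "(hrad c' * \<bar>q\<bar>)^2 \<le> (B - s)^2"
    using o1 rp by (intro power_mono) auto
  then have "(B - 1) * (A * B - s^2) \<le> (B - s)^2"
    by (simp add: power_mult_distrib rB qq)
  then have "B * ((A - 1) * (B - 1)) \<le> B * (s - 1)^2"
    by (simp add: algebra_simps power2_eq_square)
  moreover have "B > 0" unfolding B_def using c' by (auto simp: zero_less_power2)
  ultimately have ge: "(A - 1) * (B - 1) \<le> (s - 1)^2" by simp
  have "(s - 1)^2 \<le> (A - 1) * (s - 1)" unfolding power2_eq_square
    using As s1 by (intro mult_right_mono) auto
  with ge have "(A - 1) * (B - 1) \<le> (A - 1) * (s - 1)" by linarith
  moreover have "A - 1 > 0" unfolding A_def using c by (simp add: one_less_power)
  ultimately have "B - 1 \<le> s - 1" by simp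
  then have sB: "s = B" using Bs by linarith
  define k0 where "k0 = c' / of_real B"
  have Bp: "B > 1" unfolding B_def using c' by (simp add: one_less_power)
  have "cmod k0 = cmod c' / B" unfolding k0_def norm_divide norm_of_real using Bp by simp
  then have "(cmod k0)^2 = B / B^2" by (simp add: power_divide B_def)
  also have "\<dots> < 1" using Bp by (simp add: power2_eq_square)
  finally have kn: "cmod k0 < 1" by (simp add: abs_square_less_1)
  have cc: "c' * cnj c' = of_real B" unfolding B_def by (rule complex_norm_square[symmetric])
  have "k0 * cnj c' = (c' * cnj c') / of_real B" unfolding k0_def by simp
  then have e1: "Re (k0 * cnj c') = 1" using Bp by (simp add: cc)
  have "k0 * cnj c = (c' * cnj c) / of_real B" unfolding k0_def by simp
  then have e2: "Re (k0 * cnj c) = 1" using Bp sB unfolding s_def by (simp add: Re_divide_of_real)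
  have "P k0 \<in> hline c" using P_hline[OF c kn e2] .
  moreover have "P k0 \<in> hline c'" using P_hline[OF c' kn e1] .
  ultimately show False using disj by blast
qed


lemma comp_sub:
  assumes c: "cmod c > 1" and X: "hline c \<subseteq> X"
  shows "connected_component_set (unit_disk - X) 0 \<subseteq> {z. hrad c \<le> cmod (z - c)}"
proof
  fix z assume z: "z \<in> connected_component_set (unit_disk - X) 0"
  define C where "C = connected_component_set (unit_disk - X) 0"
  show "z \<in> {z. hrad c \<le> cmod (z - c)}"
  proof (rule ccontr)
    assume "z \<notin> {z. hrad c \<le> cmod (z - c)}"
    then have zV: "cmod (z - c) < hrad c" by simp
    define U where "U = {w. hrad c < cmod (w - c)}"
    define V where "V = {w. cmod (w - c) < hrad c}"
    have oU: "open U" unfolding U_def by (intro open_Collect_less continuous_intros)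
    have oV: "open V" unfolding V_def by (intro open_Collect_less continuous_intros)
    have sub: "C \<subseteq> U \<union> V"
    proof
      fix w assume w: "w \<in> C"
      then have "w \<in> unit_disk - X" unfolding C_def using connected_component_subset by blast
      then have "w \<notin> hline c" "w \<in> unit_disk" using X by auto
      then have "cmod (w - c) \<noteq> hrad c" unfolding hline_def by auto
      then show "w \<in> U \<union> V" unfolding U_def V_def by auto
    qed
    have "U \<inter> V \<inter> C = {}" unfolding U_def V_def by auto
    from connectedD[OF connected_connected_component oU oV this[unfolded C_def] sub[unfolded C_def]]
    have "U \<inter> C = {} \<or> V \<inter> C = {}" unfolding C_def .
    moreover have "z \<in> V \<inter> C" using zV z unfolding V_def C_def by auto
    moreover have "0 \<in> C"
    proof -
      have "0 \<in> unit_disk - X" using z connected_component_in by (metis mem_Collect_eq)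
      then show ?thesis unfolding C_def by (simp add: connected_component_refl)
    qed
    moreover have "0 \<in> U" unfolding U_def using hrad_lt[OF c] by simp
    ultimately show False by blast
  qed
qed

lemma frontier_sub:
  assumes c: "cmod c > 1" and X: "hline c \<subseteq> X"
  shows "frontier (connected_component_set (unit_disk - X) 0) \<subseteq> {z. hrad c \<le> cmod (z - c)}"
proof -
  have cl: "closed {z. hrad c \<le> cmod (z - c)}" by (intro closed_Collect_le continuous_intros)
  have "closure (connected_component_set (unit_disk - X) 0) \<subseteq> {z. hrad c \<le> cmod (z - c)}"
    using closure_minimal[OF comp_sub[OF c X] cl] .
  then show ?thesis unfolding frontier_def by blast
qed

lemma angle_re:
  assumes c: "cmod c > 1" and c': "cmod c' > 1" and p: "p \<in> hline c \<inter> hline c'"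
    and m: "(m::nat) \<ge> 2" and sa: "sector_angle c c' p 0 = pi / real m"
  shows "Re (c * cnj c') \<le> 1"
proof -
  have side: "side c 0 = 1" "side c' 0 = 1"
    unfolding side_def using hrad_lt[OF c] hrad_lt[OF c'] by auto
  define u where "u = p - c"
  define v where "v = p - c'"
  have va: "vec_angle u v = pi - pi / real m"
    using sa unfolding sector_angle_def side u_def v_def by simp
  have "pi / real m \<le> pi / 2" using m by (intro divide_left_mono) auto
  then have va2: "vec_angle u v \<ge> pi / 2" using va by simp
  have pd: "cmod p < 1" using p unfolding hline_def unit_disk_def by auto
  have "p \<noteq> c" using pd c by auto
  then have u0: "cmod u > 0" unfolding u_def by simp
  have "p \<noteq> c'" using pd c' by auto
  then have v0: "cmod v > 0" unfolding v_def by simp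
  have neg: "Re (u * cnj v) \<le> 0"
  proof (rule ccontr)
    assume "\<not> ?thesis"
    define t where "t = Re (u * cnj v) / (cmod u * cmod v)"
    have t0: "t > 0" unfolding t_def using \<open>\<not> Re (u * cnj v) \<le> 0\<close> u0 v0 by simp
    have "Re (u * cnj v) \<le> cmod u * cmod v"
      using complex_Re_le_cmod[of "u * cnj v"] by (simp add: norm_mult)
    then have t1: "t \<le> 1" unfolding t_def using u0 v0 by simp
    have "arccos t < arccos 0" using arccos_less_arccos[of 0 t] t0 t1 by simp
    then have "vec_angle u v < pi / 2" unfolding vec_angle_def t_def[symmetric] by simp
    then show False using va2 by simp
  qed
  have e1: "(cmod p)^2 + 1 = 2 * Re (p * cnj c)" using p circ_iff[OF c] unfolding hline_def by auto
  have e2: "(cmod p)^2 + 1 = 2 * Re (p * cnj c')" using p circ_iff[OF c'] unfolding hline_def by auto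
  have "Re (u * cnj v) = (cmod p)^2 - Re (p * cnj c') - Re (p * cnj c) + Re (c * cnj c')"
    unfolding u_def v_def by (simp only: cmod_sq) (simp add: algebra_simps power2_eq_square)
  then show ?thesis using neg e1 e2 by linarith
qed

lemma pair_re:
  assumes c: "cmod c > 1" and c': "cmod c' > 1" and pc: "pair_condition c c' 0"
  shows "Re (c * cnj c') \<le> 1"
  using pc unfolding pair_condition_def
proof (elim disjE conjE exE)
  assume disj: "hline c \<inter> hline c' = {}"
    and fr: "hline c \<union> hline c' \<subseteq> frontier (connected_component_set (unit_disk - (hline c \<union> hline c')) 0)"
  have H1: "\<forall>z\<in>hline c'. hrad c \<le> cmod (z - c)"
    using fr frontier_sub[OF c, of "hline c \<union> hline c'"] by blast
  have H2: "\<forall>z\<in>hline c. hrad c' \<le> cmod (z - c')"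
    using fr frontier_sub[OF c', of "hline c \<union> hline c'"] by blast
  show ?thesis using disjoint_re[OF c c' disj H1 H2] .
next
  fix p m assume "p \<in> hline c \<inter> hline c'" "(m::nat) \<ge> 2" "sector_angle c c' p 0 = pi / real m"
  then show ?thesis using angle_re[OF c c'] by blast
qed

lemma real_pair:
  fixes a a' b b' :: real
  assumes "a \<ge> 1" "a' \<ge> 1" "b * b' \<ge> 0" "a * a' + b * b' \<le> 1" "a^2 + b^2 > 1" "a'^2 + b'^2 > 1"
  shows False
proof -
  have h1: "a * a' \<ge> a * 1" using assms by (intro mult_left_mono) auto
  have h2: "a * a' \<ge> 1 * a'" using assms by (intro mult_right_mono) auto
  have "a = 1" using h1 assms by linarith
  moreover have "a' = 1" using h2 assms by linarith
  moreover have "b * b' = 0" using h1 assms by linarith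
  ultimately show False using assms by (auto simp: power2_eq_square)
qed

lemma real_three:
  fixes a1 a2 a3 b1 b2 b3 :: real
  assumes "a1 \<ge> 1" "a2 \<ge> 1" "a3 \<ge> 1"
    "a1 * a2 + b1 * b2 \<le> 1" "a1 * a3 + b1 * b3 \<le> 1" "a2 * a3 + b2 * b3 \<le> 1"
    "a1^2 + b1^2 > 1" "a2^2 + b2^2 > 1" "a3^2 + b3^2 > 1"
  shows False
proof -
  have "b1 * b2 \<ge> 0 \<or> b1 * b3 \<ge> 0 \<or> b2 * b3 \<ge> 0"
    by (cases "b1 \<ge> 0"; cases "b2 \<ge> 0"; cases "b3 \<ge> 0")
       (auto simp: zero_le_mult_iff)
  then show False using real_pair assms by metis
qed

lemma no_common:
  assumes c: "\<forall>i\<in>{1,2,3::nat}. cmod (c i) > 1"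
    and pr: "\<forall>i\<in>{1,2,3::nat}. \<forall>j\<in>{1,2,3::nat}. i \<noteq> j \<longrightarrow> Re (c i * cnj (c j)) \<le> 1"
    and e: "cmod e = 1"
  shows "\<exists>i\<in>{1,2,3::nat}. Re (e * cnj (c i)) < 1"
proof (rule ccontr)
  assume "\<not> ?thesis"
  then have ge: "\<forall>i\<in>{1,2,3::nat}. Re (e * cnj (c i)) \<ge> 1" by auto
  define w where "w i = c i * cnj e" for i
  have ee: "e * cnj e = 1" using e complex_norm_square[of e] by simp
  have a: "Re (w i) = Re (e * cnj (c i))" for i unfolding w_def by (simp add: algebra_simps)
  have pp: "Re (c i * cnj (c j)) = Re (w i) * Re (w j) + Im (w i) * Im (w j)" for i j
  proof -
    have "c i * cnj (c j) = w i * cnj (w j)" unfolding w_def using ee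
      by (simp add: algebra_simps)
    then show ?thesis by simp
  qed
  have nn: "Re (w i)^2 + Im (w i)^2 = (cmod (c i))^2" for i
  proof -
    have "cmod (w i) = cmod (c i)" unfolding w_def using e by (simp add: norm_mult)
    then show ?thesis using cmod_sq[of "w i"] by simp
  qed
  have n1: "(cmod (c i))^2 > 1" if "i \<in> {1,2,3}" for i
  proof -
    have "cmod (c i) > 1" using c that by blast
    then show ?thesis by (simp add: one_less_power)
  qed
  have A: "Re (w i) \<ge> 1" if "i \<in> {1,2,3}" for i unfolding a using ge that by blast
  have Q: "Re (w i) * Re (w j) + Im (w i) * Im (w j) \<le> 1"
    if "i \<in> {1,2,3}" "j \<in> {1,2,3}" "i \<noteq> j" for i j
    unfolding pp[symmetric] using pr that by blast
  have N: "Re (w i)^2 + Im (w i)^2 > 1" if "i \<in> {1,2,3}" for i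
    unfolding nn using n1 that by blast
  show False
    by (rule real_three[OF A[of 1] A[of 2] A[of 3] Q[of 1 2] Q[of 1 3] Q[of 2 3] N[of 1] N[of 2] N[of 3]]) auto
qed


theorem mainTheorem6:
  fixes c :: "nat \<Rightarrow> complex"
  assumes "\<forall>i\<in>{1,2,3::nat}. cmod (c i) > 1"
    and "config_condition c 0"
  shows "\<exists>C::real. C < 1 \<and>
           (\<forall>x y. cmod x = 1 \<longrightarrow> cmod y = 1 \<longrightarrow> x \<noteq> y \<longrightarrow>
              (\<exists>i\<in>{1,2,3::nat}. cmod (tau (c i) x - tau (c i) y) < C * cmod (x - y)))"
proof -
  note cc = assms(1)
  have pr: "\<forall>i\<in>{1,2,3::nat}. \<forall>j\<in>{1,2,3::nat}. i \<noteq> j \<longrightarrow> Re (c i * cnj (c j)) \<le> 1"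
  proof (intro ballI impI)
    fix i j :: nat assume i: "i \<in> {1,2,3}" and j: "j \<in> {1,2,3}" and ij: "i \<noteq> j"
    have "pair_condition (c i) (c j) 0" using assms(2) i j ij unfolding config_condition_def by blast
    moreover have "cmod (c i) > 1" "cmod (c j) > 1" using cc i j by auto
    ultimately show "Re (c i * cnj (c j)) \<le> 1" using pair_re by blast
  qed
  define f where "f i x = cmod (x - c i) / hrad (c i)" for i x
  define g where "g x = max (max (f 1 x) (f 2 x)) (f 3 x)" for x
  have hz: "hrad (c i) \<noteq> 0" if "i \<in> {1,2,3}" for i
    using hrad_pos cc that by (metis less_irrefl)
  have cg: "continuous_on (sphere 0 1) g" unfolding g_def f_def
    by (intro continuous_intros) (auto simp: hz)
  obtain x0 where x0: "x0 \<in> sphere 0 1" and mn: "\<forall>y\<in>sphere 0 1. g x0 \<le> g y"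
    using continuous_attains_inf[OF compact_sphere _ cg] by fastforce
  define m where "m = g x0"
  have gi: "\<exists>i\<in>{1,2,3::nat}. f i x = g x" for x
    unfolding g_def by (auto simp: max_def)
  have fg: "f i x \<le> g x" if "i \<in> {1,2,3}" for i x
    using that unfolding g_def by auto
  have m1: "m > 1"
  proof -
    have "cmod x0 = 1" using x0 by simp
    then obtain i where i: "i \<in> {1,2,3}" and re: "Re (x0 * cnj (c i)) < 1"
      using no_common[OF cc pr] by blast
    have ci: "cmod (c i) > 1" using cc i by auto
    have "(cmod x0)^2 + 1 > 2 * Re (x0 * cnj (c i))" using re \<open>cmod x0 = 1\<close> by simp
    then have "cmod (x0 - c i) > hrad (c i)" using outside_iff[OF ci] by simp
    then have "f i x0 > 1" unfolding f_def using hrad_pos[OF ci] by simp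
    then show ?thesis unfolding m_def using fg[OF i] by (meson less_le_trans)
  qed
  define C where "C = (1 + 1 / m) / 2"
  have mC: "1 / m < C" unfolding C_def using m1 by (simp add: field_simps)
  show ?thesis
  proof (intro exI conjI allI impI)
    show "C < 1" unfolding C_def using m1 by (simp add: field_simps)
  next
    fix x y :: complex assume x: "cmod x = 1" and y: "cmod y = 1" and xy: "x \<noteq> y"
    obtain i where i: "i \<in> {1,2,3}" and fi: "f i x = g x" using gi by blast
    have ci: "cmod (c i) > 1" using cc i by auto
    have rp: "hrad (c i) > 0" using hrad_pos[OF ci] .
    have "g x \<ge> m" unfolding m_def using mn x by simp
    then have fm: "cmod (x - c i) / hrad (c i) \<ge> m" using fi unfolding f_def by simp
    then have fm': "cmod (x - c i) \<ge> m * hrad (c i)" using rp by (simp add: le_divide_eq)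
    have out: "cmod (x - c i) > hrad (c i)" using fm' m1 rp
      by (smt (verit) mult_less_cancel_right1)
    have xpos: "cmod (x - c i) > 0" using out rp by linarith
    have rat: "hrad (c i) / cmod (x - c i) \<le> 1 / m"
      using fm' xpos m1 by (simp add: field_simps)
    have "cmod (tau (c i) x - tau (c i) y) \<le> hrad (c i) / cmod (x - c i) * cmod (x - y)"
      using tau_bound[OF ci out] .
    also have "\<dots> \<le> 1 / m * cmod (x - y)" using rat by (intro mult_right_mono) auto
    also have "\<dots> < C * cmod (x - y)" using mC xy by (intro mult_strict_right_mono) auto
    finally show "\<exists>i\<in>{1,2,3::nat}. cmod (tau (c i) x - tau (c i) y) < C * cmod (x - y)"
      using i by blast
  qed
qed

end
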